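(* For all integers $n\ge 4$ and $k\ge 0$, $$A_{n,k}\,b_n^{(k)}+B_{n,k}\,b_{n-1}^{(k)}+C_{n,k}\,b_{n-2}^{(k)}+D_{n,k}\,b_{n-3}^{(k)}+E_{n,k}\,b_{n-4}^{(k)}=0,$$ where $A_{n,k}=(n^2-(k+1)^2)(n^2-k^2)$, $B_{n,k}=-2n(2n-1)(n+k)(n-k-1)$, $C_{n,k}=-2n(n-1)\left(n^2-2n+3-3k(k+1)\right)$, $D_{n,k}=6n(n-1)(n-2)(2n-3)$, $E_{n,k}=9n(n-1)(n-2)(n-3)$.
   Context: Let $X(\theta)=1+2\cos\theta$ and, for $k\ge 0$, $\chi_k(\theta)=1+2\sum_{j=1}^{k}\cos(j\theta)$ (the character of the $(k+1)$-dimensional irreducible representation of the Lie algebra $A_1$). For $n\ge 0$ the integers $b_n^{(k)}$, $0\le k\le n$, are the unique coefficients with $X(\theta)^n=\sum_{k=0}^{n}b_n^{(k)}\chi_k(\theta)$ for all real $\theta$; set $b_n^{(k)}=0$ for $k>n$. *)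

theory Defs
  imports Complex_Main
begin

definition Xfun :: "real \<Rightarrow> real" where
  "Xfun \<theta> = 1 + 2 * cos \<theta>"

definition chi :: "nat \<Rightarrow> real \<Rightarrow> real" where
  "chi k \<theta> = 1 + 2 * (\<Sum>j=1..k. cos (real j * \<theta>))"

definition bcoef :: "nat \<Rightarrow> nat \<Rightarrow> int" where
  "bcoef n k = (if k \<le> n then
     (THE c. (\<forall>\<theta>. Xfun \<theta> ^ n = (\<Sum>i=0..n. real_of_int (c i) * chi i \<theta>))
             \<and> (\<forall>i>n. c i = 0)) k
   else 0)"

end

theory Submission
  imports Defs
begin


fun T :: "nat \<Rightarrow> int \<Rightarrow> int" where
  "T 0 k = (if k = 0 then 1 else 0)"
| "T (Suc n) k = T n (k - 1) + T n k + T n (k + 1)"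

lemma T_zero: "\<bar>k\<bar> > int n \<Longrightarrow> T n k = 0"
proof (induction n arbitrary: k)
  case 0 then show ?case by simp
next
  case (Suc n)
  have "T n (k - 1) = 0" "T n k = 0" "T n (k + 1) = 0"
    using Suc.prems by (auto intro!: Suc.IH)
  then show ?case by simp
qed

lemma T_sym: "T n (- k) = T n k"
proof (induction n arbitrary: k)
  case 0 then show ?case by simp
next
  case (Suc n)
  have e1: "- k - 1 = - (k + 1)" by simp
  have e2: "- k + 1 = - (k - 1)" by simp
  have a: "T n (- k - 1) = T n (k + 1)" unfolding e1 by (rule Suc.IH)
  have b: "T n (- k + 1) = T n (k - 1)" unfolding e2 by (rule Suc.IH)
  show ?case using a b Suc.IH[of k] by simp
qed

lemma T_contig: "(k - 1 - int n) * T n (k - 1) + k * T n k + (k + 1 + int n) * T n (k + 1) = 0"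
proof (induction n arbitrary: k)
  case 0 then show ?case by auto
next
  case (Suc n)
  have h1: "(k - 1 - 1 - int n) * T n (k - 1 - 1) + (k - 1) * T n (k - 1) + (k - 1 + 1 + int n) * T n (k - 1 + 1) = 0"
    using Suc.IH[of "k - 1"] .
  have h3: "(k + 1 - 1 - int n) * T n (k + 1 - 1) + (k + 1) * T n (k + 1) + (k + 1 + 1 + int n) * T n (k + 1 + 1) = 0"
    using Suc.IH[of "k + 1"] .
  note h2 = Suc.IH[of k]
  have "(k - 1 - int (Suc n)) * T (Suc n) (k - 1) + k * T (Suc n) k + (k + 1 + int (Suc n)) * T (Suc n) (k + 1)
     = ((k - 1 - 1 - int n) * T n (k - 1 - 1) + (k - 1) * T n (k - 1) + (k - 1 + 1 + int n) * T n (k - 1 + 1))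
     + ((k - 1 - int n) * T n (k - 1) + k * T n k + (k + 1 + int n) * T n (k + 1))
     + ((k + 1 - 1 - int n) * T n (k + 1 - 1) + (k + 1) * T n (k + 1) + (k + 1 + 1 + int n) * T n (k + 1 + 1))"
    by (simp add: algebra_simps)
  then show ?case using h1 h2 h3 by simp
qed

lemma sum_shift_int:
  fixes h :: "int \<Rightarrow> real"
  assumes "a - 1 \<le> b"
  shows "(\<Sum>j\<in>{a..b}. h (j + 1)) = (\<Sum>j\<in>{a..b}. h j) + h (b + 1) - h a"
  using assms
proof (induct b rule: int_ge_induct)
  case base then show ?case by simp
next
  case (step b)
  have e: "{a..b+1} = insert (b+1) {a..b}" using step by auto
  show ?case unfolding e using step by simp
qed

lemma cos_prod: "2 * cos t * cos (x::real) = cos (x + t) + cos (x - t)"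
  by (simp add: cos_add cos_diff)

lemma X_pow_int:
  assumes "int n \<le> N"
  shows "Xfun \<theta> ^ n = (\<Sum>j\<in>{-N..N}. real_of_int (T n j) * cos (of_int j * \<theta>))"
  using assms
proof (induction n arbitrary: N)
  case 0
  have "(\<Sum>j\<in>{-N..N}. real_of_int (T 0 j) * cos (of_int j * \<theta>)) = (\<Sum>j\<in>{-N..N}. if j = 0 then 1 else 0)"
    by (rule sum.cong) auto
  also have "\<dots> = 1" using 0 by simp
  finally show ?case by simp
next
  case (Suc n)
  let ?f = "\<lambda>j. real_of_int (T n j) * cos (of_int j * \<theta>)"
  have IH: "Xfun \<theta> ^ n = (\<Sum>j\<in>{-N..N}. ?f j)" using Suc by simp
  define g where "g = (\<lambda>j. real_of_int (T n (j - 1)) * cos (of_int j * \<theta>))"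
  define h where "h = (\<lambda>j. real_of_int (T n (j + 1)) * cos (of_int j * \<theta>))"
  have s1: "(\<Sum>j\<in>{-N..N}. real_of_int (T n j) * cos (of_int j * \<theta> + \<theta>)) = (\<Sum>j\<in>{-N..N}. g j)"
  proof -
    have "(\<Sum>j\<in>{-N..N}. real_of_int (T n j) * cos (of_int j * \<theta> + \<theta>)) = (\<Sum>j\<in>{-N..N}. g (j + 1))"
      by (rule sum.cong) (auto simp: g_def algebra_simps)
    also have "\<dots> = (\<Sum>j\<in>{-N..N}. g j) + g (N + 1) - g (- N)"
      using Suc.prems by (intro sum_shift_int) auto
    also have "g (N + 1) = 0" unfolding g_def using Suc.prems by (simp add: T_zero)
    also have "g (- N) = 0" unfolding g_def using Suc.prems by (simp add: T_zero)
    finally show ?thesis by simp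
  qed
  have s2: "(\<Sum>j\<in>{-N..N}. real_of_int (T n j) * cos (of_int j * \<theta> - \<theta>)) = (\<Sum>j\<in>{-N..N}. h j)"
  proof -
    let ?h = "\<lambda>j. h (j - 1)"
    have "(\<Sum>j\<in>{-N..N}. real_of_int (T n j) * cos (of_int j * \<theta> - \<theta>)) = (\<Sum>j\<in>{-N..N}. ?h j)"
      by (rule sum.cong) (auto simp: h_def algebra_simps)
    moreover have "(\<Sum>j\<in>{-N..N}. ?h (j + 1)) = (\<Sum>j\<in>{-N..N}. ?h j) + ?h (N + 1) - ?h (- N)"
      using Suc.prems by (intro sum_shift_int) auto
    moreover have "h N = 0" unfolding h_def using Suc.prems by (simp add: T_zero)
    moreover have "h (- N - 1) = 0" unfolding h_def using Suc.prems by (simp add: T_zero)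
    ultimately show ?thesis by simp
  qed
  have "Xfun \<theta> ^ Suc n = (\<Sum>j\<in>{-N..N}. ?f j) + (\<Sum>j\<in>{-N..N}. real_of_int (T n j) * (2 * cos \<theta> * cos (of_int j * \<theta>)))"
  proof -
    have "Xfun \<theta> ^ Suc n = (1 + 2 * cos \<theta>) * (\<Sum>j\<in>{-N..N}. ?f j)" by (simp only: power_Suc IH) (simp add: Xfun_def)
    also have "\<dots> = (\<Sum>j\<in>{-N..N}. ?f j) + (\<Sum>j\<in>{-N..N}. real_of_int (T n j) * (2 * cos \<theta> * cos (of_int j * \<theta>)))"
      by (simp add: ring_distribs sum_distrib_left sum.distrib mult_ac)
    finally show ?thesis .
  qed
  also have "\<dots> = (\<Sum>j\<in>{-N..N}. ?f j) + (\<Sum>j\<in>{-N..N}. real_of_int (T n j) * cos (of_int j * \<theta> + \<theta>))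
      + (\<Sum>j\<in>{-N..N}. real_of_int (T n j) * cos (of_int j * \<theta> - \<theta>))"
    by (simp add: cos_prod distrib_left sum.distrib)
  also have "\<dots> = (\<Sum>j\<in>{-N..N}. real_of_int (T (Suc n) j) * cos (of_int j * \<theta>))"
    unfolding s1 s2 by (simp add: g_def h_def sum.distrib[symmetric] algebra_simps)
  finally show ?case .
qed

lemma sum_sym_int:
  fixes f :: "int \<Rightarrow> real"
  shows "(\<Sum>j\<in>{-int m..int m}. f j) = f 0 + (\<Sum>i=1..m. f (int i) + f (- int i))"
proof (induction m)
  case 0 then show ?case by simp
next
  case (Suc m)
  have e: "{-int (Suc m)..int (Suc m)} = insert (-int (Suc m)) (insert (int (Suc m)) {-int m..int m})" by auto
  show ?case unfolding e using Suc by (simp add: algebra_simps)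
qed

lemma X_pow_cos:
  "Xfun \<theta> ^ n = real_of_int (T n 0) + 2 * (\<Sum>j=1..n. real_of_int (T n (int j)) * cos (real j * \<theta>))"
proof -
  have "Xfun \<theta> ^ n = (\<Sum>j\<in>{-int n..int n}. real_of_int (T n j) * cos (of_int j * \<theta>))"
    by (rule X_pow_int) simp
  also have "\<dots> = real_of_int (T n 0) + (\<Sum>i=1..n. 2 * (real_of_int (T n (int i)) * cos (real i * \<theta>)))"
    unfolding sum_sym_int by (simp add: T_sym)
  finally show ?thesis by (simp add: sum_distrib_left)
qed

lemma chi_Suc: "chi (Suc i) \<theta> = chi i \<theta> + 2 * cos (real (Suc i) * \<theta>)"
  unfolding chi_def by (simp add: algebra_simps)

lemma abel:
  fixes a :: "nat \<Rightarrow> real"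
  shows "(\<Sum>i=0..n. (a i - a (Suc i)) * chi i \<theta>)
       = a 0 - a (Suc n) + 2 * (\<Sum>j=1..n. (a j - a (Suc n)) * cos (real j * \<theta>))"
proof (induction n)
  case 0 then show ?case by (simp add: chi_def)
next
  case (Suc n)
  have d: "(\<Sum>j=1..n. (a j - a (Suc (Suc n))) * cos (real j * \<theta>))
     = (\<Sum>j=1..n. (a j - a (Suc n)) * cos (real j * \<theta>)) + (a (Suc n) - a (Suc (Suc n))) * (\<Sum>j=1..n. cos (real j * \<theta>))"
    by (simp add: sum_distrib_left sum.distrib[symmetric] algebra_simps)
  have L: "(\<Sum>i=0..Suc n. (a i - a (Suc i)) * chi i \<theta>) = (\<Sum>i=0..n. (a i - a (Suc i)) * chi i \<theta>) + (a (Suc n) - a (Suc (Suc n))) * chi (Suc n) \<theta>"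
    by simp
  have c: "chi (Suc n) \<theta> = 1 + 2 * ((\<Sum>j=1..n. cos (real j * \<theta>)) + cos (real (Suc n) * \<theta>))"
    unfolding chi_def by simp
  have r: "(\<Sum>j=1..Suc n. (a j - a (Suc (Suc n))) * cos (real j * \<theta>)) = (\<Sum>j=1..n. (a j - a (Suc (Suc n))) * cos (real j * \<theta>)) + (a (Suc n) - a (Suc (Suc n))) * cos (real (Suc n) * \<theta>)"
    by simp
  show ?case
    apply (simp only: L c r d Suc.IH)
    by (simp add: algebra_simps)
qed

lemma cos_indep:
  fixes w :: "nat \<Rightarrow> real"
  assumes "\<forall>\<theta>. (\<Sum>j=0..n. w j * cos (real j * \<theta>)) = 0" and "j \<le> n"
  shows "w j = 0"
  using assms
proof (induction n arbitrary: w j)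
  case 0 then show ?case by auto
next
  case (Suc n)
  define h where "h = pi / real (Suc n)"
  have hc: "cos (real (Suc n) * h) = -1" unfolding h_def by simp
  define w' where "w' = (\<lambda>j. 2 * w j * (cos (real j * h) + 1))"
  have br: "cos (real j * (t + h)) + cos (real j * (t - h)) + 2 * cos (real j * t) = 2 * cos (real j * t) * (cos (real j * h) + 1)" for j t
    by (simp add: distrib_left right_diff_distrib cos_add cos_diff algebra_simps)
  have all: "(\<Sum>j=0..n. w' j * cos (real j * t)) = 0" for t
  proof -
    have "0 = (\<Sum>j=0..Suc n. w j * cos (real j * (t + h))) + (\<Sum>j=0..Suc n. w j * cos (real j * (t - h))) + 2 * (\<Sum>j=0..Suc n. w j * cos (real j * t))"
      using Suc.prems(1) by simp
    also have "\<dots> = (\<Sum>j=0..Suc n. w j * (cos (real j * (t + h)) + cos (real j * (t - h)) + 2 * cos (real j * t)))"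
      by (simp add: sum.distrib sum_distrib_left algebra_simps)
    also have "\<dots> = (\<Sum>j=0..Suc n. w' j * cos (real j * t))"
      unfolding br w'_def by (simp add: algebra_simps)
    also have "\<dots> = (\<Sum>j=0..n. w' j * cos (real j * t))"
      using hc by (simp add: w'_def)
    finally show ?thesis by simp
  qed
  have low: "w i = 0" if "i \<le> n" for i
  proof -
    have "w' i = 0" using Suc.IH[of w' i] all that by blast
    moreover have "cos (real i * h) + 1 > 0"
    proof -
      have q: "real i / real (Suc n) < 1" using that by simp
      have "pi * (real i / real (Suc n)) < pi * 1" using pi_gt_zero q by (intro mult_strict_left_mono) auto
      moreover have "real i * h = pi * (real i / real (Suc n))" unfolding h_def by simp
      ultimately have "real i * h < pi" by simp
      moreover have "0 \<le> real i * h" unfolding h_def by simp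
      ultimately have "cos pi < cos (real i * h)" by (intro cos_monotone_0_pi) auto
      then show ?thesis by simp
    qed
    ultimately show ?thesis unfolding w'_def by simp
  qed
  have "(\<Sum>j=0..Suc n. w j * cos (real j * 0)) = 0" using Suc.prems(1) by blast
  then have "w (Suc n) = 0" using low by simp
  then show ?case using low Suc.prems(2) by (cases "j = Suc n") auto
qed


lemma chi_indep:
  fixes e :: "nat \<Rightarrow> real"
  assumes h: "\<forall>\<theta>. (\<Sum>i=0..n. e i * chi i \<theta>) = 0" and "i \<le> n"
  shows "e i = 0"
proof -
  define a where "a = (\<lambda>i. \<Sum>l=i..n. e l)"
  have ae: "a i - a (Suc i) = e i" if "i \<le> n" for i
    unfolding a_def using that by (simp add: sum.atLeast_Suc_atMost)
  have an: "a (Suc n) = 0" unfolding a_def by simp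
  define w where "w = (\<lambda>j. if j = 0 then a 0 else 2 * a j)"
  have "(\<Sum>j=0..n. w j * cos (real j * \<theta>)) = 0" for \<theta>
  proof -
    have "0 = (\<Sum>i=0..n. e i * chi i \<theta>)" using h by simp
    also have "\<dots> = (\<Sum>i=0..n. (a i - a (Suc i)) * chi i \<theta>)"
      by (rule sum.cong) (auto simp: ae)
    also have "\<dots> = a 0 + 2 * (\<Sum>j=1..n. a j * cos (real j * \<theta>))"
      unfolding abel an by simp
    also have "\<dots> = (\<Sum>j=0..n. w j * cos (real j * \<theta>))"
      by (simp add: sum.atLeast_Suc_atMost[of 0 n] w_def sum_distrib_left mult.assoc)
    finally show ?thesis by simp
  qed
  then have w0: "w j = 0" if "j \<le> n" for j using cos_indep that by blast
  have a0: "a j = 0" if "j \<le> Suc n" for j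
  proof (cases "j = Suc n")
    case True then show ?thesis using an by simp
  next
    case False then have "j \<le> n" using that by simp
    then show ?thesis using w0[of j] unfolding w_def by (auto split: if_splits)
  qed
  show ?thesis using ae[of i] a0[of i] a0[of "Suc i"] assms(2) by simp
qed

definition bb :: "nat \<Rightarrow> nat \<Rightarrow> int" where
  "bb n i = T n (int i) - T n (int i + 1)"

lemma bb_zero: "i > n \<Longrightarrow> bb n i = 0"
  unfolding bb_def by (simp add: T_zero)

lemma bb_exist: "Xfun \<theta> ^ n = (\<Sum>i=0..n. real_of_int (bb n i) * chi i \<theta>)"
proof -
  define a where "a = (\<lambda>i::nat. real_of_int (T n (int i)))"
  have an: "a (Suc n) = 0" unfolding a_def by (simp add: T_zero)
  have "(\<Sum>i=0..n. real_of_int (bb n i) * chi i \<theta>) = (\<Sum>i=0..n. (a i - a (Suc i)) * chi i \<theta>)"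
    by (rule sum.cong) (auto simp: a_def bb_def add.commute)
  also have "\<dots> = a 0 + 2 * (\<Sum>j=1..n. a j * cos (real j * \<theta>))"
    unfolding abel an by simp
  also have "\<dots> = Xfun \<theta> ^ n" unfolding X_pow_cos a_def by simp
  finally show ?thesis by simp
qed

lemma bcoef_eq: "bcoef n k = bb n k"
proof (cases "k \<le> n")
  case False then show ?thesis by (simp add: bcoef_def bb_zero)
next
  case True
  let ?P = "\<lambda>c. (\<forall>\<theta>. Xfun \<theta> ^ n = (\<Sum>i=0..n. real_of_int (c i) * chi i \<theta>)) \<and> (\<forall>i>n. c i = 0)"
  have "(THE c. ?P c) = bb n"
  proof (rule the_equality)
    show "?P (bb n)" using bb_exist bb_zero by blast
  next
    fix c assume hc: "?P c"
    show "c = bb n"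
    proof
      fix i
      show "c i = bb n i"
      proof (cases "i \<le> n")
        case False then show ?thesis using hc bb_zero by simp
      next
        case True
        have "\<forall>\<theta>. (\<Sum>i=0..n. (real_of_int (c i) - real_of_int (bb n i)) * chi i \<theta>) = 0"
        proof
          fix \<theta>
          have "(\<Sum>i=0..n. (real_of_int (c i) - real_of_int (bb n i)) * chi i \<theta>)
              = (\<Sum>i=0..n. real_of_int (c i) * chi i \<theta>) - (\<Sum>i=0..n. real_of_int (bb n i) * chi i \<theta>)"
            by (simp add: sum_subtractf left_diff_distrib)
          also have "\<dots> = 0" using hc bb_exist[of \<theta> n] by simp
          finally show "(\<Sum>i=0..n. (real_of_int (c i) - real_of_int (bb n i)) * chi i \<theta>) = 0" .
        qed
        from chi_indep[OF this True] show ?thesis by simp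
      qed
    qed
  qed
  then show ?thesis using True by (simp add: bcoef_def)
qed

lemma alg:
  fixes x :: "nat \<Rightarrow> int \<Rightarrow> int" and m k N K A B C D E :: int
  assumes P: "\<And>j s. x (Suc j) s = x j (s - 1) + x j s + x j (s + 1)"
    and R: "\<And>s. (k + s - 1 - m) * x 0 (s - 1) + (k + s) * x 0 s + (k + s + 1 + m) * x 0 (s + 1) = 0"
    and hN: "N = m + 4" and hK: "K = k"
    and hA: "A = (N^2 - (K+1)^2) * (N^2 - K^2)"
    and hB: "B = - 2 * N * (2*N - 1) * (N + K) * (N - K - 1)"
    and hC: "C = - 2 * N * (N - 1) * (N^2 - 2*N + 3 - 3*K*(K+1))"
    and hD: "D = 6 * N * (N - 1) * (N - 2) * (2*N - 3)"
    and hE: "E = 9 * N * (N - 1) * (N - 2) * (N - 3)"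
  shows "A * (x 4 0 - x 4 1) + B * (x 3 0 - x 3 1) + C * (x 2 0 - x 2 1) + D * (x 1 0 - x 1 1) + E * (x 0 0 - x 0 1) = 0"
proof -
  have p_4_10: "x 4 0 = x 3 (-1) + x 3 0 + x 3 1" using P[of 3 "0"] by (simp add: eval_nat_numeral)
  have p_4_11: "x 4 1 = x 3 0 + x 3 1 + x 3 2" using P[of 3 "1"] by (simp add: eval_nat_numeral)
  have p_3_9: "x 3 (-1) = x 2 (-2) + x 2 (-1) + x 2 0" using P[of 2 "(-1)"] by (simp add: eval_nat_numeral)
  have p_3_10: "x 3 0 = x 2 (-1) + x 2 0 + x 2 1" using P[of 2 "0"] by (simp add: eval_nat_numeral)
  have p_3_11: "x 3 1 = x 2 0 + x 2 1 + x 2 2" using P[of 2 "1"] by (simp add: eval_nat_numeral)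
  have p_3_12: "x 3 2 = x 2 1 + x 2 2 + x 2 3" using P[of 2 "2"] by (simp add: eval_nat_numeral)
  have p_2_8: "x 2 (-2) = x 1 (-3) + x 1 (-2) + x 1 (-1)" using P[of 1 "(-2)"] by (simp add: eval_nat_numeral)
  have p_2_9: "x 2 (-1) = x 1 (-2) + x 1 (-1) + x 1 0" using P[of 1 "(-1)"] by (simp add: eval_nat_numeral)
  have p_2_10: "x 2 0 = x 1 (-1) + x 1 0 + x 1 1" using P[of 1 "0"] by (simp add: eval_nat_numeral)
  have p_2_11: "x 2 1 = x 1 0 + x 1 1 + x 1 2" using P[of 1 "1"] by (simp add: eval_nat_numeral)
  have p_2_12: "x 2 2 = x 1 1 + x 1 2 + x 1 3" using P[of 1 "2"] by (simp add: eval_nat_numeral)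
  have p_2_13: "x 2 3 = x 1 2 + x 1 3 + x 1 4" using P[of 1 "3"] by (simp add: eval_nat_numeral)
  have p_1_7: "x 1 (-3) = x 0 (-4) + x 0 (-3) + x 0 (-2)" using P[of 0 "(-3)"] by (simp add: eval_nat_numeral)
  have p_1_8: "x 1 (-2) = x 0 (-3) + x 0 (-2) + x 0 (-1)" using P[of 0 "(-2)"] by (simp add: eval_nat_numeral)
  have p_1_9: "x 1 (-1) = x 0 (-2) + x 0 (-1) + x 0 0" using P[of 0 "(-1)"] by (simp add: eval_nat_numeral)
  have p_1_10: "x 1 0 = x 0 (-1) + x 0 0 + x 0 1" using P[of 0 "0"] by (simp add: eval_nat_numeral)
  have p_1_11: "x 1 1 = x 0 0 + x 0 1 + x 0 2" using P[of 0 "1"] by (simp add: eval_nat_numeral)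
  have p_1_12: "x 1 2 = x 0 1 + x 0 2 + x 0 3" using P[of 0 "2"] by (simp add: eval_nat_numeral)
  have p_1_13: "x 1 3 = x 0 2 + x 0 3 + x 0 4" using P[of 0 "3"] by (simp add: eval_nat_numeral)
  have p_1_14: "x 1 4 = x 0 3 + x 0 4 + x 0 5" using P[of 0 "4"] by (simp add: eval_nat_numeral)
  have r_7: "((k + (-3) - 1 - m) * x 0 (-4) + (k + (-3)) * x 0 (-3) + (k + (-3) + 1 + m) * x 0 (-2)) = 0" using R[of "(-3)"] by (simp add: eval_nat_numeral)
  have r_8: "((k + (-2) - 1 - m) * x 0 (-3) + (k + (-2)) * x 0 (-2) + (k + (-2) + 1 + m) * x 0 (-1)) = 0" using R[of "(-2)"] by (simp add: eval_nat_numeral)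
  have r_9: "((k + (-1) - 1 - m) * x 0 (-2) + (k + (-1)) * x 0 (-1) + (k + (-1) + 1 + m) * x 0 0) = 0" using R[of "(-1)"] by (simp add: eval_nat_numeral)
  have r_10: "((k + (0) - 1 - m) * x 0 (-1) + (k + (0)) * x 0 0 + (k + (0) + 1 + m) * x 0 1) = 0" using R[of "0"] by (simp add: eval_nat_numeral)
  have r_11: "((k + (1) - 1 - m) * x 0 0 + (k + (1)) * x 0 1 + (k + (1) + 1 + m) * x 0 2) = 0" using R[of "1"] by (simp add: eval_nat_numeral)
  have r_12: "((k + (2) - 1 - m) * x 0 1 + (k + (2)) * x 0 2 + (k + (2) + 1 + m) * x 0 3) = 0" using R[of "2"] by (simp add: eval_nat_numeral)
  have r_13: "((k + (3) - 1 - m) * x 0 2 + (k + (3)) * x 0 3 + (k + (3) + 1 + m) * x 0 4) = 0" using R[of "3"] by (simp add: eval_nat_numeral)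
  have r_14: "((k + (4) - 1 - m) * x 0 3 + (k + (4)) * x 0 4 + (k + (4) + 1 + m) * x 0 5) = 0" using R[of "4"] by (simp add: eval_nat_numeral)
  have eq: "A * (x 4 0 - x 4 1) + B * (x 3 0 - x 3 1) + C * (x 2 0 - x 2 1) + D * (x 1 0 - x 1 1) + E * (x 0 0 - x 0 1) = ((-60) + (-7)*k + (6)*k^2 + k^3 + (-47)*m + (-6)*m*k + m*k^2 + (-12)*m^2 + (-1)*m^2*k + (-1)*m^3) * ((k + (-3) - 1 - m) * x 0 (-4) + (k + (-3)) * x 0 (-3) + (k + (-3) + 1 + m) * x 0 (-2)) + ((44) + (15)*k + (9)*k^2 + (2)*k^3 + (35)*m + (3)*m*k + m*k^2 + (10)*m^2 + m^3) * ((k + (-2) - 1 - m) * x 0 (-3) + (k + (-2)) * x 0 (-2) + (k + (-2) + 1 + m) * x 0 (-1)) + ((100) + (38)*k + (9)*k^2 + (3)*k^3 + (89)*m + (16)*m*k + (28)*m^2 + (2)*m^2*k + (3)*m^3) * ((k + (-1) - 1 - m) * x 0 (-2) + (k + (-1)) * x 0 (-1) + (k + (-1) + 1 + m) * x 0 0) + ((-24) + (19)*k + k^3 + (-58)*m + (7)*m*k + (-2)*m*k^2 + (-25)*m^2 + m^2*k + (-3)*m^3) * ((k + (0) - 1 - m) * x 0 (-1) + (k + (0)) * x 0 0 + (k + (0) + 1 + m) * x 0 1) + ((-44) + (-22)*k + (-3)*k^2 + (-1)*k^3 + (-67)*m + (-11)*m*k + (-2)*m*k^2 + (-26)*m^2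 + (-1)*m^2*k + (-3)*m^3) * ((k + (1) - 1 - m) * x 0 0 + (k + (1)) * x 0 1 + (k + (1) + 1 + m) * x 0 2) + ((68) + (-29)*k + (-3)*k^3 + (73)*m + (-16)*m*k + (26)*m^2 + (-2)*m^2*k + (3)*m^3) * ((k + (2) - 1 - m) * x 0 1 + (k + (2)) * x 0 2 + (k + (2) + 1 + m) * x 0 3) + ((36) + (-3)*k + (3)*k^2 + (-2)*k^3 + (33)*m + (-1)*m*k + m*k^2 + (10)*m^2 + m^3) * ((k + (3) - 1 - m) * x 0 2 + (k + (3)) * x 0 3 + (k + (3) + 1 + m) * x 0 4) + ((-48) + (16)*k + (3)*k^2 + (-1)*k^3 + (-40)*m + (8)*m*k + m*k^2 + (-11)*m^2 + m^2*k + (-1)*m^3) * ((k + (4) - 1 - m) * x 0 3 + (k + (4)) * x 0 4 + (k + (4) + 1 + m) * x 0 5)"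
    unfolding hA hB hC hD hE hN hK
    apply (simp only: p_4_10 p_4_11 p_3_9 p_3_10 p_3_11 p_3_12 p_2_8 p_2_9 p_2_10 p_2_11 p_2_12 p_2_13 p_1_7 p_1_8 p_1_9 p_1_10 p_1_11 p_1_12 p_1_13 p_1_14)
    by (simp add: algebra_simps power2_eq_square power3_eq_cube)
  show ?thesis unfolding eq using r_7 r_8 r_9 r_10 r_11 r_12 r_13 r_14 by simp
qed

theorem theorem4:
  fixes n k :: nat
  assumes "n \<ge> 4"
  shows "let N = int n; K = int k;
           A = (N^2 - (K+1)^2) * (N^2 - K^2);
           B = - 2 * N * (2*N - 1) * (N + K) * (N - K - 1);
           C = - 2 * N * (N - 1) * (N^2 - 2*N + 3 - 3*K*(K+1));
           D = 6 * N * (N - 1) * (N - 2) * (2*N - 3);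
           E = 9 * N * (N - 1) * (N - 2) * (N - 3)
         in A * bcoef n k + B * bcoef (n-1) k + C * bcoef (n-2) k
            + D * bcoef (n-3) k + E * bcoef (n-4) k = 0"
proof -
  obtain m where n: "n = m + 4" using assms by (metis add.commute le_Suc_ex)
  define x where "x = (\<lambda>j s. T (m + j) (int k + s))"
  have P: "\<And>j s. x (Suc j) s = x j (s - 1) + x j s + x j (s + 1)"
    by (simp add: x_def algebra_simps)
  have R: "\<And>s. (int k + s - 1 - int m) * x 0 (s - 1) + (int k + s) * x 0 s + (int k + s + 1 + int m) * x 0 (s + 1) = 0"
  proof -
    fix s
    show "(int k + s - 1 - int m) * x 0 (s - 1) + (int k + s) * x 0 s + (int k + s + 1 + int m) * x 0 (s + 1) = 0"
      using T_contig[of "int k + s" m] by (simp add: x_def algebra_simps)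
  qed
  have b4: "bcoef n k = x 4 0 - x 4 1" by (simp add: n bcoef_eq bb_def x_def add.commute)
  have b3: "bcoef (n - 1) k = x 3 0 - x 3 1" by (simp add: n bcoef_eq bb_def x_def add.commute)
  have b2: "bcoef (n - 2) k = x 2 0 - x 2 1" by (simp add: n bcoef_eq bb_def x_def add.commute)
  have b1: "bcoef (n - 3) k = x 1 0 - x 1 1" by (simp add: n bcoef_eq bb_def x_def add.commute)
  have b0: "bcoef (n - 4) k = x 0 0 - x 0 1" by (simp add: n bcoef_eq bb_def x_def add.commute)
  have hN: "int n = int m + 4" using n by simp
  show ?thesis unfolding Let_def b4 b3 b2 b1 b0
    by (rule alg[OF P R hN refl refl refl refl refl refl])
qed

end
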